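(* Assume $l=-\infty$ and $r=\infty$. The following are equivalent: (a) there exists $y\in I$ such that $G_y(a)<\infty$ for all $a>0$; (b) $G_y(a)<\infty$ for all $y\in I$ and all $a>0$.
   Context: Let $-\infty\le l<r\le\infty$, $I=(l,r)$, $\eta\colon\mathbb R\to\mathbb R$ Borel with $\eta\ne0$ on $I$, $1/\eta^2\in L^1_{\mathrm{loc}}(I)$, $\eta=0$ off $I$. For $y\in I$, $x\in\mathbb R$, $q(y,x)=\int_y^x\int_y^u\frac{2}{\eta^2(z)}\,dz\,du\in[0,\infty]$. Let $\mu\ne\delta_0$ be a centered probability measure on $\mathbb R$ with finite first moment. For $y\in I$, $a\ge0$, $G_y(a)=\int_{\mathbb R} q(y,y+ax)\,\mu(dx)\in[0,\infty]$. *)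

theory Defs
  imports "HOL-Probability.Probability"
begin

text \<open>Scale function q(y,x) = int_y^x int_y^u 2/eta(z)^2 dz du, valued in [0,\<infinity>].
  For x < y both oriented integrals are reversed, giving the nonnegative value
  int_x^y int_u^y 2/eta(z)^2 dz du.\<close>
definition q :: "(real \<Rightarrow> real) \<Rightarrow> real \<Rightarrow> real \<Rightarrow> ennreal" where
  "q \<eta> y x =
     (if y \<le> x
      then (\<integral>\<^sup>+ u \<in> {y..x}. (\<integral>\<^sup>+ z \<in> {y..u}. ennreal (2 / (\<eta> z)\<^sup>2) \<partial>lborel) \<partial>lborel)
      else (\<integral>\<^sup>+ u \<in> {x..y}. (\<integral>\<^sup>+ z \<in> {u..y}. ennreal (2 / (\<eta> z)\<^sup>2) \<partial>lborel) \<partial>lborel))"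

definition G :: "(real \<Rightarrow> real) \<Rightarrow> real measure \<Rightarrow> real \<Rightarrow> real \<Rightarrow> ennreal" where
  "G \<eta> \<mu> y a = (\<integral>\<^sup>+ x. q \<eta> y (y + a * x) \<partial>\<mu>)"

end

theory Submission
  imports Defs
begin

definition FF :: "(real \<Rightarrow> ennreal) \<Rightarrow> real \<Rightarrow> real \<Rightarrow> ennreal" where
  "FF f a b = (\<integral>\<^sup>+ z. f z * indicator {a..b} z \<partial>lborel)"

definition QQ :: "(real \<Rightarrow> ennreal) \<Rightarrow> real \<Rightarrow> real \<Rightarrow> ennreal" where
  "QQ f y x = (if y \<le> x then (\<integral>\<^sup>+ u. FF f y u * indicator {y..x} u \<partial>lborel)
               else (\<integral>\<^sup>+ u. FF f u y * indicator {x..y} u \<partial>lborel))"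

lemma q_QQ: "q \<eta> y x = QQ (\<lambda>z. ennreal (2 / (\<eta> z)\<^sup>2)) y x"
  by (simp add: q_def QQ_def FF_def)

lemma Fmeas1:
  fixes f :: "real \<Rightarrow> ennreal"
  assumes f: "f \<in> borel_measurable borel"
  shows "(\<lambda>u. \<integral>\<^sup>+ z. f z * indicator {a..u} z \<partial>lborel) \<in> borel_measurable borel"
proof -
  have "(\<lambda>(u,z). f z * indicator {a..u} z) \<in> borel_measurable (borel \<Otimes>\<^sub>M lborel)"
  proof -
    have e: "(\<lambda>(u,z). f z * indicator {a..u} z) = (\<lambda>p. f (snd p) * indicator {p. a \<le> snd p \<and> snd p \<le> fst p} p)"
      by (auto simp: indicator_def fun_eq_iff)
    show ?thesis unfolding e using f by measurable
  qed
  then show ?thesis by (rule lborel.borel_measurable_nn_integral[where f="\<lambda>u z. f z * indicator {a..u} z", simplified])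
qed

lemma Fmeas2:
  fixes f :: "real \<Rightarrow> ennreal"
  assumes f: "f \<in> borel_measurable borel"
  shows "(\<lambda>u. \<integral>\<^sup>+ z. f z * indicator {u..a} z \<partial>lborel) \<in> borel_measurable borel"
proof -
  have "(\<lambda>(u,z). f z * indicator {u..a} z) \<in> borel_measurable (borel \<Otimes>\<^sub>M lborel)"
  proof -
    have e: "(\<lambda>(u,z). f z * indicator {u..a} z) = (\<lambda>p. f (snd p) * indicator {p. fst p \<le> snd p \<and> snd p \<le> a} p)"
      by (auto simp: indicator_def fun_eq_iff)
    show ?thesis unfolding e using f by measurable
  qed
  then show ?thesis by (rule lborel.borel_measurable_nn_integral[where f="\<lambda>u z. f z * indicator {u..a} z", simplified])
qed

lemma FF_meas1: "f \<in> borel_measurable borel \<Longrightarrow> FF f a \<in> borel_measurable borel"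
  unfolding FF_def[abs_def] by (rule Fmeas1)

lemma FF_meas2: "f \<in> borel_measurable borel \<Longrightarrow> (\<lambda>u. FF f u a) \<in> borel_measurable borel"
  unfolding FF_def by (rule Fmeas2)

lemma QQ_meas:
  assumes f: "f \<in> borel_measurable borel"
  shows "QQ f y \<in> borel_measurable borel"
proof -
  have m1: "(\<lambda>x. \<integral>\<^sup>+ u. FF f y u * indicator {y..x} u \<partial>lborel) \<in> borel_measurable borel"
    by (rule Fmeas1[OF FF_meas1[OF f]])
  have m2: "(\<lambda>x. \<integral>\<^sup>+ u. FF f u y * indicator {x..y} u \<partial>lborel) \<in> borel_measurable borel"
    by (rule Fmeas2[OF FF_meas2[OF f]])
  show ?thesis unfolding QQ_def[abs_def] using m1 m2 by measurable
qed

lemma FF_mono: "a' \<le> a \<Longrightarrow> b \<le> b' \<Longrightarrow> FF f a b \<le> FF f a' b'"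
  unfolding FF_def by (intro nn_integral_mono) (auto simp: indicator_def)

lemma FF_split:
  assumes f: "f \<in> borel_measurable borel"
  shows "FF f a c \<le> FF f a b + FF f b c"
proof -
  have "FF f a c \<le> (\<integral>\<^sup>+ z. f z * indicator {a..b} z + f z * indicator {b..c} z \<partial>lborel)"
    unfolding FF_def by (intro nn_integral_mono) (auto simp: indicator_def)
  also have "\<dots> = FF f a b + FF f b c"
    unfolding FF_def using f by (intro nn_integral_add) auto
  finally show ?thesis .
qed

lemma QQ_self: "QQ f y y = 0"
proof -
  have "QQ f y y \<le> (\<integral>\<^sup>+ u. FF f y y * indicator {y..y} u \<partial>lborel)"
    unfolding QQ_def if_P[OF order_refl] by (intro nn_integral_mono) (auto simp: indicator_def)
  also have "\<dots> = 0" by (subst nn_integral_cmult_indicator) auto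
  finally show ?thesis by simp
qed

lemma QQ_fin:
  assumes fin: "\<And>a b. FF f a b < \<infinity>"
  shows "QQ f y x < \<infinity>"
proof (cases "y \<le> x")
  case True
  have "QQ f y x \<le> (\<integral>\<^sup>+ u. FF f y x * indicator {y..x} u \<partial>lborel)"
    unfolding QQ_def if_P[OF True] by (intro nn_integral_mono) (auto simp: indicator_def intro!: FF_mono)
  also have "\<dots> = FF f y x * ennreal (x - y)" using True by (subst nn_integral_cmult_indicator) auto
  also have "\<dots> < \<infinity>" using fin by (simp add: ennreal_mult_less_top)
  finally show ?thesis .
next
  case False
  have "QQ f y x \<le> (\<integral>\<^sup>+ u. FF f x y * indicator {x..y} u \<partial>lborel)"
    unfolding QQ_def if_not_P[OF False] by (intro nn_integral_mono) (auto simp: indicator_def intro!: FF_mono)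
  also have "\<dots> = FF f x y * ennreal (y - x)" using False by (subst nn_integral_cmult_indicator) auto
  also have "\<dots> < \<infinity>" using fin by (simp add: ennreal_mult_less_top)
  finally show ?thesis .
qed

lemma QQ_mono_pos:
  assumes "0 \<le> s" "s \<le> t"
  shows "QQ f y (y + s) \<le> QQ f y (y + t)"
  unfolding QQ_def using assms by (auto intro!: nn_integral_mono simp: indicator_def)

lemma QQ_mono_neg:
  assumes "t \<le> s" "s \<le> 0"
  shows "QQ f y (y + s) \<le> QQ f y (y + t)"
proof (cases "s = 0")
  case True then show ?thesis using QQ_self[of f y] by simp
next
  case False
  then show ?thesis
    unfolding QQ_def using assms by (auto intro!: nn_integral_mono simp: indicator_def)
qed


lemma QQ_compare:
  assumes f: "f \<in> borel_measurable borel"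
  shows "QQ f y' x \<le> QQ f y x + FF f (min y y') (max y y') * ennreal \<bar>x - y'\<bar>"
proof (cases "y' \<le> x")
  case True
  define K where "K = FF f (min y y') (max y y')"
  have "QQ f y' x = (\<integral>\<^sup>+ u. FF f y' u * indicator {y'..x} u \<partial>lborel)"
    unfolding QQ_def if_P[OF True] ..
  also have "\<dots> \<le> (\<integral>\<^sup>+ u. K * indicator {y'..x} u + FF f y u * indicator {y..x} u \<partial>lborel)"
  proof (intro nn_integral_mono)
    fix u
    show "FF f y' u * indicator {y'..x} u \<le> K * indicator {y'..x} u + FF f y u * indicator {y..x} u"
    proof (cases "u \<in> {y'..x}")
      case False then show ?thesis by simp
    next
      case u: True
      show ?thesis
      proof (cases "y \<le> u")
        case yu: True
        have "FF f y' u \<le> K + FF f y u"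
        proof (cases "y' \<le> y")
          case True
          have "FF f y' u \<le> FF f y' y + FF f y u" by (rule FF_split[OF f])
          also have "FF f y' y \<le> K" unfolding K_def using True by (intro FF_mono) auto
          finally show ?thesis by (simp add: add_right_mono)
        next
          case False
          then have "FF f y' u \<le> FF f y u" by (intro FF_mono) auto
          then show ?thesis by (simp add: add_increasing)
        qed
        then show ?thesis using u yu by simp
      next
        case False
        have "FF f y' u \<le> K" unfolding K_def using False u by (intro FF_mono) auto
        then show ?thesis using u False by simp
      qed
    qed
  qed
  also have "\<dots> = (\<integral>\<^sup>+ u. K * indicator {y'..x} u \<partial>lborel) + (\<integral>\<^sup>+ u. FF f y u * indicator {y..x} u \<partial>lborel)"
    using FF_meas1[OF f] by (intro nn_integral_add) auto
  also have "(\<integral>\<^sup>+ u. K * indicator {y'..x} u \<partial>lborel) = K * ennreal \<bar>x - y'\<bar>"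
    using True by (subst nn_integral_cmult_indicator) auto
  also have "(\<integral>\<^sup>+ u. FF f y u * indicator {y..x} u \<partial>lborel) \<le> QQ f y x"
  proof (cases "y \<le> x")
    case True then show ?thesis unfolding QQ_def by simp
  next
    case False
    then have "(\<integral>\<^sup>+ u. FF f y u * indicator {y..x} u \<partial>lborel) = 0" by simp
    then show ?thesis by simp
  qed
  finally show ?thesis unfolding K_def by (simp add: add.commute add_left_mono)
next
  case False
  define K where "K = FF f (min y y') (max y y')"
  have "QQ f y' x = (\<integral>\<^sup>+ u. FF f u y' * indicator {x..y'} u \<partial>lborel)"
    unfolding QQ_def if_not_P[OF False] ..
  also have "\<dots> \<le> (\<integral>\<^sup>+ u. K * indicator {x..y'} u + FF f u y * indicator {x..y} u \<partial>lborel)"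
  proof (intro nn_integral_mono)
    fix u
    show "FF f u y' * indicator {x..y'} u \<le> K * indicator {x..y'} u + FF f u y * indicator {x..y} u"
    proof (cases "u \<in> {x..y'}")
      case False then show ?thesis by simp
    next
      case u: True
      show ?thesis
      proof (cases "u \<le> y")
        case yu: True
        have "FF f u y' \<le> K + FF f u y"
        proof (cases "y \<le> y'")
          case True
          have "FF f u y' \<le> FF f u y + FF f y y'" by (rule FF_split[OF f])
          also have "FF f y y' \<le> K" unfolding K_def using True by (intro FF_mono) auto
          finally show ?thesis by (simp add: add.commute add_left_mono)
        next
          case False
          then have "FF f u y' \<le> FF f u y" by (intro FF_mono) auto
          then show ?thesis by (simp add: add_increasing)
        qed
        then show ?thesis using u yu by simp
      next
        case False
        have "FF f u y' \<le> K" unfolding K_def using False u by (intro FF_mono) auto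
        then show ?thesis using u False by simp
      qed
    qed
  qed
  also have "\<dots> = (\<integral>\<^sup>+ u. K * indicator {x..y'} u \<partial>lborel) + (\<integral>\<^sup>+ u. FF f u y * indicator {x..y} u \<partial>lborel)"
    using FF_meas2[OF f] by (intro nn_integral_add) auto
  also have "(\<integral>\<^sup>+ u. K * indicator {x..y'} u \<partial>lborel) = K * ennreal \<bar>x - y'\<bar>"
    using False by (subst nn_integral_cmult_indicator) auto
  also have "(\<integral>\<^sup>+ u. FF f u y * indicator {x..y} u \<partial>lborel) \<le> QQ f y x"
  proof (cases "x < y")
    case True then show ?thesis unfolding QQ_def by simp
  next
    case False
    have "(\<integral>\<^sup>+ u. FF f u y * indicator {x..y} u \<partial>lborel) \<le> (\<integral>\<^sup>+ u. FF f y y * indicator {x..y} u \<partial>lborel)"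
    proof (intro nn_integral_mono)
      fix u show "FF f u y * indicator {x..y} u \<le> FF f y y * indicator {x..y} u"
      proof (cases "u \<in> {x..y}")
        case True then have "u = y" using False by auto
        then show ?thesis by simp
      qed simp
    qed
    also have "\<dots> = 0" using False by (subst nn_integral_cmult_indicator) (auto simp: emeasure_lborel_Icc_eq)
    finally show ?thesis by simp
  qed
  finally show ?thesis unfolding K_def by (simp add: add.commute add_left_mono)
qed

lemma QQ_shift:
  assumes a: "a > 0" and b: "b = \<bar>d\<bar> + a"
  shows "QQ f y (y + (d + a * x)) \<le> QQ f y (y + b * x) + (QQ f y (y + b) + QQ f y (y + - b))"
proof -
  define s where "s = d + a * x"
  have "QQ f y (y + s) \<le> QQ f y (y + b * x) \<or> QQ f y (y + s) \<le> QQ f y (y + b) \<or> QQ f y (y + s) \<le> QQ f y (y + - b)"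
  proof (cases "\<bar>x\<bar> \<le> 1")
    case True
    have "\<bar>a * x\<bar> \<le> a" using True a by (simp add: abs_mult mult_left_le)
    then have "\<bar>s\<bar> \<le> b" unfolding s_def b by linarith
    then show ?thesis
      by (cases "0 \<le> s") (auto intro: QQ_mono_pos QQ_mono_neg QQ_mono_neg[of "-b" s f y, simplified])
  next
    case False
    show ?thesis
    proof (cases "x > 1")
      case x: True
      have "\<bar>d\<bar> \<le> \<bar>d\<bar> * x" using x by (simp add: mult_le_cancel_left1)
      moreover have "b * x = \<bar>d\<bar> * x + a * x" unfolding b by (simp add: distrib_right)
      ultimately have "s \<le> b * x" unfolding s_def by linarith
      moreover have "-b \<le> s" if "s < 0"
      proof -
        have "0 \<le> a * x" using x a by simp
        then show ?thesis unfolding s_def b using a by linarith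
      qed
      ultimately show ?thesis
        by (cases "0 \<le> s") (auto intro: QQ_mono_pos QQ_mono_neg QQ_mono_neg[of "-b" s f y, simplified])
    next
      case x: False
      with False have x: "x < -1" by linarith
      have "\<bar>d\<bar> * x \<le> - \<bar>d\<bar>" using x mult_left_mono[of x "-1" "\<bar>d\<bar>"] by simp
      moreover have "b * x = \<bar>d\<bar> * x + a * x" unfolding b by (simp add: distrib_right)
      ultimately have "b * x \<le> s" unfolding s_def by linarith
      moreover have "s \<le> b"
      proof -
        have "a * x \<le> 0" using x a by (simp add: mult_nonneg_nonpos)
        then show ?thesis unfolding s_def b using a by linarith
      qed
      ultimately show ?thesis
        by (cases "0 \<le> s") (auto intro: QQ_mono_pos QQ_mono_neg QQ_mono_neg[of "-b" s f y, simplified])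
    qed
  qed
  then have "QQ f y (y + s) \<le> QQ f y (y + b * x) + (QQ f y (y + b) + QQ f y (y + - b))"
  proof (elim disjE)
    assume h: "QQ f y (y + s) \<le> QQ f y (y + b * x)"
    show ?thesis by (rule order_trans[OF h]) (simp add: add_increasing2)
  next
    assume h: "QQ f y (y + s) \<le> QQ f y (y + b)"
    show ?thesis by (rule order_trans[OF h]) (simp add: add_increasing add_increasing2)
  next
    assume h: "QQ f y (y + s) \<le> QQ f y (y + - b)"
    show ?thesis by (rule order_trans[OF h]) (simp add: add_increasing add_increasing2)
  qed
  then show ?thesis unfolding s_def .
qed


theorem mainTheorem2:
  fixes \<eta> :: "real \<Rightarrow> real" and \<mu> :: "real measure"
  assumes "\<eta> \<in> borel_measurable borel"
    and "\<forall>z. \<eta> z \<noteq> 0"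
    and "\<forall>a b. set_integrable lborel {a..b} (\<lambda>z. 1 / (\<eta> z)\<^sup>2)"
    and "prob_space \<mu>"
    and "sets \<mu> = sets borel"
    and "integrable \<mu> (\<lambda>x. x)"
    and "(\<integral>x. x \<partial>\<mu>) = 0"
    and "\<mu> \<noteq> return borel 0"
  shows "(\<exists>y. \<forall>a>0. G \<eta> \<mu> y a < \<infinity>) \<longleftrightarrow> (\<forall>y. \<forall>a>0. G \<eta> \<mu> y a < \<infinity>)"
proof
  assume "\<forall>y. \<forall>a>0. G \<eta> \<mu> y a < \<infinity>"
  then show "\<exists>y. \<forall>a>0. G \<eta> \<mu> y a < \<infinity>" by blast
next
  assume "\<exists>y. \<forall>a>0. G \<eta> \<mu> y a < \<infinity>"
  then obtain y0 where y0: "\<And>a. a > 0 \<Longrightarrow> G \<eta> \<mu> y0 a < \<infinity>" by blast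
  define f where "f = (\<lambda>z. ennreal (2 / (\<eta> z)\<^sup>2))"
  have fm: "f \<in> borel_measurable borel" unfolding f_def using assms(1) by measurable
  have fin: "FF f a b < \<infinity>" for a b
  proof -
    have "integrable lborel (\<lambda>z. indicator {a..b} z *\<^sub>R (1 / (\<eta> z)\<^sup>2))"
      using assms(3) by (simp add: set_integrable_def)
    then have "(\<integral>\<^sup>+ z. ennreal (norm (indicator {a..b} z *\<^sub>R (1 / (\<eta> z)\<^sup>2))) \<partial>lborel) < \<infinity>"
      by (simp add: integrable_iff_bounded)
    moreover have "FF f a b = (\<integral>\<^sup>+ z. 2 * ennreal (norm (indicator {a..b} z *\<^sub>R (1 / (\<eta> z)\<^sup>2))) \<partial>lborel)"
    proof -
      have e: "ennreal (2 / (\<eta> z)\<^sup>2) = 2 * ennreal (1 / (\<eta> z)\<^sup>2)" for z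
        using ennreal_mult[of 2 "1 / (\<eta> z)\<^sup>2"] by simp
      show ?thesis
        unfolding FF_def f_def by (intro nn_integral_cong) (auto simp: indicator_def e)
    qed
    moreover have "\<dots> = 2 * (\<integral>\<^sup>+ z. ennreal (norm (indicator {a..b} z *\<^sub>R (1 / (\<eta> z)\<^sup>2))) \<partial>lborel)"
      using assms(1) by (intro nn_integral_cmult) measurable
    ultimately show ?thesis by (simp add: ennreal_mult_less_top)
  qed
  have Gq: "G \<eta> \<mu> y a = (\<integral>\<^sup>+ x. QQ f y (y + a * x) \<partial>\<mu>)" for y a
    unfolding G_def q_QQ f_def ..
  have mu: "g \<in> borel_measurable \<mu>" if "g \<in> borel_measurable borel" for g :: "real \<Rightarrow> ennreal"
    using that measurable_cong_sets[OF assms(5) refl, of borel] by metis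
  interpret P: prob_space \<mu> by (rule assms(4))
  have absfin: "(\<integral>\<^sup>+ x. ennreal \<bar>x\<bar> \<partial>\<mu>) < \<infinity>"
    using assms(6) by (simp add: integrable_iff_bounded)
  show "\<forall>y. \<forall>a>0. G \<eta> \<mu> y a < \<infinity>"
  proof (intro allI impI)
    fix y a :: real assume a: "a > 0"
    define d where "d = y - y0"
    define b where "b = \<bar>d\<bar> + a"
    have b0: "b > 0" unfolding b_def using a by simp
    define K where "K = FF f (min y0 y) (max y0 y)"
    define C where "C = QQ f y0 (y0 + b) + QQ f y0 (y0 + - b)"
    have "G \<eta> \<mu> y a \<le> (\<integral>\<^sup>+ x. QQ f y0 (y0 + b * x) + (C + K * ennreal a * ennreal \<bar>x\<bar>) \<partial>\<mu>)"
      unfolding Gq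
    proof (intro nn_integral_mono)
      fix x
      have h1: "QQ f y (y + a * x) \<le> QQ f y0 (y + a * x) + K * ennreal \<bar>y + a * x - y\<bar>"
        unfolding K_def by (rule QQ_compare[OF fm])
      have e1: "y + a * x = y0 + (d + a * x)" unfolding d_def by simp
      have e2: "ennreal \<bar>y + a * x - y\<bar> = ennreal a * ennreal \<bar>x\<bar>"
        using a by (simp add: abs_mult ennreal_mult)
      have h2: "QQ f y0 (y0 + (d + a * x)) \<le> QQ f y0 (y0 + b * x) + C"
        unfolding C_def by (rule QQ_shift[OF a b_def])
      have "QQ f y (y + a * x) \<le> QQ f y0 (y0 + (d + a * x)) + K * (ennreal a * ennreal \<bar>x\<bar>)"
        using h1 unfolding e2 by (simp only: e1)
      also have "\<dots> \<le> (QQ f y0 (y0 + b * x) + C) + K * (ennreal a * ennreal \<bar>x\<bar>)"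
        using h2 by (rule add_right_mono)
      finally show "QQ f y (y + a * x) \<le> QQ f y0 (y0 + b * x) + (C + K * ennreal a * ennreal \<bar>x\<bar>)"
        by (simp add: add.assoc mult.assoc)
    qed
    also have "\<dots> = (\<integral>\<^sup>+ x. QQ f y0 (y0 + b * x) \<partial>\<mu>) + (\<integral>\<^sup>+ x. C + K * ennreal a * ennreal \<bar>x\<bar> \<partial>\<mu>)"
    proof (intro nn_integral_add mu)
      show "(\<lambda>x. QQ f y0 (y0 + b * x)) \<in> borel_measurable borel"
        by (rule measurable_compose[OF _ QQ_meas[OF fm]]) measurable
    qed measurable
    also have "(\<integral>\<^sup>+ x. C + K * ennreal a * ennreal \<bar>x\<bar> \<partial>\<mu>) = C + K * ennreal a * (\<integral>\<^sup>+ x. ennreal \<bar>x\<bar> \<partial>\<mu>)"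
      by (subst nn_integral_add) (auto intro!: mu nn_integral_cmult simp: P.emeasure_space_1)
    also have "(\<integral>\<^sup>+ x. QQ f y0 (y0 + b * x) \<partial>\<mu>) = G \<eta> \<mu> y0 b" unfolding Gq ..
    finally have "G \<eta> \<mu> y a \<le> G \<eta> \<mu> y0 b + (C + K * ennreal a * (\<integral>\<^sup>+ x. ennreal \<bar>x\<bar> \<partial>\<mu>))" .
    moreover have "G \<eta> \<mu> y0 b + (C + K * ennreal a * (\<integral>\<^sup>+ x. ennreal \<bar>x\<bar> \<partial>\<mu>)) < \<infinity>"
      using y0[OF b0] fin absfin QQ_fin[OF fin] unfolding C_def K_def
      by (simp add: ennreal_mult_less_top)
    ultimately show "G \<eta> \<mu> y a < \<infinity>" by (rule le_less_trans)
  qed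
qed

end
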